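(* Let $g=\delta_{\{0\}}$ on $c_c$ (so $g^*\equiv 0$ on $\ell^2$). Then the primal problem $\inf_{x\in c_c}\left(f(x)+g(x)\right)$ has value $f(0)=\pi^2/12$, and the Fenchel dual problem $\sup_{y\in\ell^2}\left(-f^*(y)-g^*(-y)\right)=\sup_{y\in\ell^2}\left(-f^*(y)\right)$ also has value $\pi^2/12$ (no duality gap), but the dual supremum is not attained by any $y\in\ell^2$.
   Context: Let $c_c$ be the space of finitely supported real sequences with the $\ell^2$-norm; its dual is identified with $\ell^2$ via $\langle y,x\rangle=\sum_n y_nx_n$. Let $f\colon c_c\to\mathbb{R}$, $f(x)=\sum_{n=1}^\infty \frac{n^2}{2}(x_n-n^{-2})^2$. For $h\colon c_c\to(-\infty,\infty]$, $h^*(y)=\sup_{x\in c_c}(\langle y,x\rangle-h(x))$ for $y\in\ell^2$. $\delta_{\{0\}}$ denotes the indicator function of $\{0\}$ (value $0$ at $0$ and $+\infty$ elsewhere). *)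

theory Defs
  imports "HOL-Analysis.Analysis"
begin

text \<open>Real sequences are indexed by n = 1, 2, ...; we represent them as functions
  nat => real whose value at index 0 is fixed to 0 (index 0 is unused).\<close>

definition cc :: "(nat \<Rightarrow> real) set" where
  "cc = {x. finite {n. x n \<noteq> 0} \<and> x 0 = 0}"

definition l2 :: "(nat \<Rightarrow> real) set" where
  "l2 = {y. y 0 = 0 \<and> summable (\<lambda>n. (y n)\<^sup>2)}"

definition pairing :: "(nat \<Rightarrow> real) \<Rightarrow> (nat \<Rightarrow> real) \<Rightarrow> real" where
  "pairing y x = (\<Sum>n. y n * x n)"

definition fconj :: "((nat \<Rightarrow> real) \<Rightarrow> ereal) \<Rightarrow> (nat \<Rightarrow> real) \<Rightarrow> ereal" where
  "fconj h y = (SUP x\<in>cc. ereal (pairing y x) - h x)"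

definition fF :: "(nat \<Rightarrow> real) \<Rightarrow> real" where
  "fF x = (\<Sum>n. if n = 0 then 0 else (real n)\<^sup>2 / 2 * (x n - 1 / (real n)\<^sup>2)\<^sup>2)"

definition gG :: "(nat \<Rightarrow> real) \<Rightarrow> ereal" where
  "gG x = (if x = (\<lambda>_. 0) then 0 else \<infinity>)"

end

theory Submission
  imports Defs
begin

definition base :: "nat \<Rightarrow> real" where
  "base m = (if m = 0 then 0 else 1 / (2 * (real m)\<^sup>2))"
definition trm :: "nat \<Rightarrow> real \<Rightarrow> real" where
  "trm m t = (if m = 0 then 0 else (real m)\<^sup>2 / 2 * (t - 1 / (real m)\<^sup>2)\<^sup>2)"

lemma base_sums: "base sums (pi\<^sup>2 / 12)"
proof -
  have "(\<lambda>n. base (Suc n)) sums (pi\<^sup>2 / 6 / 2)"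
    using sums_divide[OF inverse_squares_sums, of 2] by (simp add: base_def mult.commute)
  hence "(\<lambda>n. base (Suc n)) sums (pi\<^sup>2 / 12)" by simp
  hence "base sums (pi\<^sup>2 / 12 + base 0)" by (rule iffD1[OF sums_Suc_iff])
  thus ?thesis by (simp add: base_def)
qed

lemma coord_id:
  fixes r y t :: real
  assumes "r > 0"
  shows "y * t - r\<^sup>2 / 2 * (t - 1 / r\<^sup>2)\<^sup>2
     = - 1 / (2 * r\<^sup>2) + (y + 1)\<^sup>2 / (2 * r\<^sup>2) - r\<^sup>2 / 2 * (t - (1 + y) / r\<^sup>2)\<^sup>2"
proof -
  define s where "s = r\<^sup>2"
  have s: "s \<noteq> 0" using assms by (simp add: s_def)
  have "y * t - s / 2 * (t - 1 / s)\<^sup>2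
     = - 1 / (2 * s) + (y + 1)\<^sup>2 / (2 * s) - s / 2 * (t - (1 + y) / s)\<^sup>2"
    using s by (simp add: power2_eq_square field_simps) 
  thus ?thesis by (simp add: s_def)
qed

lemma coord_le:
  assumes "m = 0 \<Longrightarrow> t = 0"
  shows "y * t - trm m t \<le> - base m + (y + 1)\<^sup>2 * base m"
proof (cases "m = 0")
  case True thus ?thesis using assms by (simp add: trm_def base_def)
next
  case False
  hence r: "real m > 0" by simp
  have "y * t - trm m t = - 1 / (2 * (real m)\<^sup>2) + (y + 1)\<^sup>2 / (2 * (real m)\<^sup>2)
      - (real m)\<^sup>2 / 2 * (t - (1 + y) / (real m)\<^sup>2)\<^sup>2"
    using coord_id[OF r] False by (simp add: trm_def)
  also have "\<dots> \<le> - 1 / (2 * (real m)\<^sup>2) + (y + 1)\<^sup>2 / (2 * (real m)\<^sup>2)" by simp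
  finally show ?thesis using False by (simp add: base_def)
qed

lemma trm_zero: "trm m 0 = base m"
  by (cases "m = 0") (simp_all add: trm_def base_def field_simps power2_eq_square)

lemma fF_trm: "fF x = (\<Sum>m. trm m (x m))"
  unfolding fF_def trm_def by simp

lemma cc_diff_sums:
  assumes "x \<in> cc"
  shows "(\<lambda>m. trm m (x m) - base m) sums (\<Sum>m\<in>{m. x m \<noteq> 0}. trm m (x m) - base m)"
  using assms by (intro sums_finite) (auto simp: cc_def trm_zero)

lemma cc_trm_summable:
  assumes "x \<in> cc"
  shows "summable (\<lambda>m. trm m (x m))"
proof -
  have "summable (\<lambda>m. base m + (trm m (x m) - base m))"
    using base_sums cc_diff_sums[OF assms] by (intro summable_add) (auto simp: sums_iff)
  thus ?thesis by simp
qed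

lemma fF_cc:
  assumes "x \<in> cc"
  shows "fF x = pi\<^sup>2 / 12 + (\<Sum>m\<in>{m. x m \<noteq> 0}. trm m (x m) - base m)"
proof -
  have "(\<lambda>m. base m + (trm m (x m) - base m)) sums
      (pi\<^sup>2 / 12 + (\<Sum>m\<in>{m. x m \<noteq> 0}. trm m (x m) - base m))"
    using base_sums cc_diff_sums[OF assms] by (intro sums_add)
  thus ?thesis by (simp add: fF_trm sums_iff)
qed

lemma zero_cc: "(\<lambda>_. 0) \<in> cc" by (simp add: cc_def)

lemma fF_zero: "fF (\<lambda>_. 0) = pi\<^sup>2 / 12"
  using fF_cc[OF zero_cc] by simp

lemma pairing_summable:
  assumes "x \<in> cc"
  shows "summable (\<lambda>n. y n * x n)"
  using assms by (intro summable_finite[of "{m. x m \<noteq> 0}"]) (auto simp: cc_def)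

lemma value_eq:
  assumes "x \<in> cc"
  shows "pairing y x - fF x = (\<Sum>m. y m * x m - trm m (x m))"
  unfolding pairing_def fF_trm
  by (rule suminf_diff[OF pairing_summable[OF assms] cc_trm_summable[OF assms]])

lemma conj_lower:
  "fconj (\<lambda>x. ereal (fF x)) y \<ge> ereal (- (pi\<^sup>2 / 12))"
proof -
  have "ereal (pairing y (\<lambda>_. 0)) - ereal (fF (\<lambda>_. 0)) \<le> fconj (\<lambda>x. ereal (fF x)) y"
    unfolding fconj_def by (rule SUP_upper[OF zero_cc])
  thus ?thesis by (simp add: pairing_def fF_zero)
qed

definition yN :: "nat \<Rightarrow> nat \<Rightarrow> real" where
  "yN N m = (if 0 < m \<and> m < N then -1 else 0)"

lemma yN_l2: "yN N \<in> l2"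
  unfolding l2_def by (auto simp: yN_def split: if_splits intro!: summable_finite[of "{..<N}"])

lemma conj_yN:
  "fconj (\<lambda>x. ereal (fF x)) (yN N) \<le> ereal (- (\<Sum>m<N. base m))"
  unfolding fconj_def
proof (rule SUP_least)
  fix x assume x: "x \<in> cc"
  define c where "c m = (if m < N then - base m else 0)" for m
  have cs: "c sums (\<Sum>m<N. c m)"
    by (intro sums_finite) (auto simp: c_def)
  have "(\<Sum>m<N. c m) = - (\<Sum>m<N. base m)"
    by (simp add: c_def sum_negf)
  have le: "yN N m * x m - trm m (x m) \<le> c m" for m
  proof -
    have "yN N m * x m - trm m (x m) \<le> - base m + (yN N m + 1)\<^sup>2 * base m"
      by (rule coord_le) (use x in \<open>simp add: cc_def\<close>)
    also have "\<dots> \<le> c m"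
      by (cases "m = 0") (auto simp: yN_def c_def base_def)
    finally show ?thesis .
  qed
  have "pairing (yN N) x - fF x \<le> suminf c"
    unfolding value_eq[OF x]
    by (rule suminf_le[OF le])
       (auto intro!: summable_diff pairing_summable[OF x] cc_trm_summable[OF x]
             simp: sums_summable[OF cs])
  also have "suminf c = - (\<Sum>m<N. base m)"
    using cs \<open>(\<Sum>m<N. c m) = _\<close> by (simp add: sums_iff)
  finally show "ereal (pairing (yN N) x) - ereal (fF x) \<le> ereal (- (\<Sum>m<N. base m))"
    by simp
qed

lemma conj_strict:
  assumes y: "y \<in> l2"
  shows "fconj (\<lambda>x. ereal (fF x)) y > ereal (- (pi\<^sup>2 / 12))"
proof -
  have "\<exists>n. n \<noteq> 0 \<and> y n \<noteq> -1"
  proof (rule ccontr)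
    assume "\<not> ?thesis"
    hence "\<forall>n\<ge>1. (y n)\<^sup>2 = 1" by (metis not_one_le_zero power2_minus power_one)
    hence ev: "eventually (\<lambda>n. (y n)\<^sup>2 = 1) sequentially"
      by (auto simp: eventually_at_top_linorder)
    have "(\<lambda>n. (y n)\<^sup>2) \<longlonglongrightarrow> 0"
      using y by (intro summable_LIMSEQ_zero) (simp add: l2_def)
    hence "(\<lambda>n. 1::real) \<longlonglongrightarrow> 0"
      using ev by (rule Lim_transform_eventually)
    thus False by (simp add: LIMSEQ_const_iff)
  qed
  then obtain n where n: "n \<noteq> 0" "y n \<noteq> -1" by blast
  define t where "t = (1 + y n) / (real n)\<^sup>2"
  define x where "x = (\<lambda>m. if m = n then t else 0)"
  have xcc: "x \<in> cc" using n by (auto simp: cc_def x_def)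
  have sub: "{m. x m \<noteq> 0} \<subseteq> {n}" by (auto simp: x_def)
  have "fF x = pi\<^sup>2 / 12 + (\<Sum>m\<in>{n}. trm m (x m) - base m)"
    unfolding fF_cc[OF xcc]
    by (rule arg_cong[where f="\<lambda>s. _ + s"], rule sum.mono_neutral_left)
       (use sub in \<open>auto simp: x_def trm_zero\<close>)
  hence fx: "fF x = pi\<^sup>2 / 12 + trm n t - base n" by (simp add: x_def)
  have px: "pairing y x = y n * t"
  proof -
    have "(\<lambda>m. y m * x m) sums (\<Sum>m\<in>{n}. y m * x m)"
      by (intro sums_finite) (auto simp: x_def)
    thus ?thesis by (simp add: pairing_def sums_iff x_def)
  qed
  have r: "real n > 0" using n by simp
  have "y n * t - trm n t = - base n + (y n + 1)\<^sup>2 * base n"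
    using coord_id[OF r, of "y n" t] n by (simp add: trm_def base_def t_def)
  hence val: "pairing y x - fF x = - (pi\<^sup>2 / 12) + (y n + 1)\<^sup>2 * base n"
    by (simp add: fx px)
  have "(y n + 1)\<^sup>2 * base n > 0" using n by (simp add: base_def)
  hence "ereal (- (pi\<^sup>2 / 12)) < ereal (pairing y x) - ereal (fF x)"
    using val by simp
  also have "\<dots> \<le> fconj (\<lambda>x. ereal (fF x)) y"
    unfolding fconj_def by (rule SUP_upper[OF xcc])
  finally show ?thesis .
qed


lemma gconj: "fconj gG y = 0"
  unfolding fconj_def
proof (rule antisym)
  show "(SUP x\<in>cc. ereal (pairing y x) - gG x) \<le> 0"
  proof (rule SUP_least)
    fix x assume "x \<in> cc"
    show "ereal (pairing y x) - gG x \<le> 0"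
      by (cases "x = (\<lambda>_. 0)") (simp_all add: gG_def pairing_def)
  qed
  have "ereal (pairing y (\<lambda>_. 0)) - gG (\<lambda>_. 0) \<le> (SUP x\<in>cc. ereal (pairing y x) - gG x)"
    by (rule SUP_upper[OF zero_cc])
  thus "0 \<le> (SUP x\<in>cc. ereal (pairing y x) - gG x)"
    by (simp add: gG_def pairing_def zero_ereal_def)
qed

lemma primal: "(INF x\<in>cc. ereal (fF x) + gG x) = ereal (fF (\<lambda>_. 0))"
proof (rule antisym)
  show "(INF x\<in>cc. ereal (fF x) + gG x) \<le> ereal (fF (\<lambda>_. 0))"
    using INF_lower[OF zero_cc, of "\<lambda>x. ereal (fF x) + gG x"] by (simp add: gG_def)
  show "ereal (fF (\<lambda>_. 0)) \<le> (INF x\<in>cc. ereal (fF x) + gG x)"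
  proof (rule INF_greatest)
    fix x assume "x \<in> cc"
    show "ereal (fF (\<lambda>_. 0)) \<le> ereal (fF x) + gG x"
      by (cases "x = (\<lambda>_. 0)") (simp_all add: gG_def)
  qed
qed

lemma dual_eq:
  "(SUP y\<in>l2. - fconj (\<lambda>x. ereal (fF x)) y - fconj gG (\<lambda>n. - y n))
        = (SUP y\<in>l2. - fconj (\<lambda>x. ereal (fF x)) y)"
  by (simp add: gconj)

lemma dual_val: "(SUP y\<in>l2. - fconj (\<lambda>x. ereal (fF x)) y) = ereal (pi\<^sup>2 / 12)"
proof (rule antisym)
  show "(SUP y\<in>l2. - fconj (\<lambda>x. ereal (fF x)) y) \<le> ereal (pi\<^sup>2 / 12)"
  proof (rule SUP_least)
    fix y :: "nat \<Rightarrow> real"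
    have "ereal (- (pi\<^sup>2 / 12)) \<le> fconj (\<lambda>x. ereal (fF x)) y" by (rule conj_lower)
    thus "- fconj (\<lambda>x. ereal (fF x)) y \<le> ereal (pi\<^sup>2 / 12)"
      by (metis ereal_minus_le_minus ereal_uminus_uminus uminus_ereal.simps(1))
  qed
  define S where "S = (SUP y\<in>l2. - fconj (\<lambda>x. ereal (fF x)) y)"
  have bnd: "ereal (\<Sum>m<N. base m) \<le> S" for N
  proof -
    have "ereal (\<Sum>m<N. base m) \<le> - fconj (\<lambda>x. ereal (fF x)) (yN N)"
      using conj_yN[of N]
      by (metis ereal_minus_le_minus ereal_uminus_uminus uminus_ereal.simps(1))
    also have "\<dots> \<le> S" unfolding S_def by (rule SUP_upper[OF yN_l2])
    finally show ?thesis .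
  qed
  have "(\<lambda>N. ereal (\<Sum>m<N. base m)) \<longlonglongrightarrow> ereal (pi\<^sup>2 / 12)"
    using base_sums by (simp add: sums_def)
  thus "ereal (pi\<^sup>2 / 12) \<le> S"
    by (rule LIMSEQ_le_const2) (use bnd in blast)
qed

theorem mainTheorem6:
  shows "(\<forall>y\<in>l2. fconj gG y = 0)
    \<and> fF (\<lambda>_. 0) = pi\<^sup>2 / 12
    \<and> (INF x\<in>cc. ereal (fF x) + gG x) = ereal (fF (\<lambda>_. 0))
    \<and> (INF x\<in>cc. ereal (fF x) + gG x) = ereal (pi\<^sup>2 / 12)
    \<and> (SUP y\<in>l2. - fconj (\<lambda>x. ereal (fF x)) y - fconj gG (\<lambda>n. - y n))
        = (SUP y\<in>l2. - fconj (\<lambda>x. ereal (fF x)) y)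
    \<and> (SUP y\<in>l2. - fconj (\<lambda>x. ereal (fF x)) y - fconj gG (\<lambda>n. - y n)) = ereal (pi\<^sup>2 / 12)
    \<and> \<not> (\<exists>y\<in>l2. - fconj (\<lambda>x. ereal (fF x)) y - fconj gG (\<lambda>n. - y n) = ereal (pi\<^sup>2 / 12))"
proof (intro conjI)
  show "\<forall>y\<in>l2. fconj gG y = 0" by (simp add: gconj)
  show "fF (\<lambda>_. 0) = pi\<^sup>2 / 12" by (rule fF_zero)
  show "(INF x\<in>cc. ereal (fF x) + gG x) = ereal (fF (\<lambda>_. 0))" by (rule primal)
  show "(INF x\<in>cc. ereal (fF x) + gG x) = ereal (pi\<^sup>2 / 12)" by (simp add: primal fF_zero)
  show "(SUP y\<in>l2. - fconj (\<lambda>x. ereal (fF x)) y - fconj gG (\<lambda>n. - y n))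
        = (SUP y\<in>l2. - fconj (\<lambda>x. ereal (fF x)) y)" by (rule dual_eq)
  show "(SUP y\<in>l2. - fconj (\<lambda>x. ereal (fF x)) y - fconj gG (\<lambda>n. - y n)) = ereal (pi\<^sup>2 / 12)"
    by (simp only: dual_eq dual_val)
  show "\<not> (\<exists>y\<in>l2. - fconj (\<lambda>x. ereal (fF x)) y - fconj gG (\<lambda>n. - y n) = ereal (pi\<^sup>2 / 12))"
  proof
    assume "\<exists>y\<in>l2. - fconj (\<lambda>x. ereal (fF x)) y - fconj gG (\<lambda>n. - y n) = ereal (pi\<^sup>2 / 12)"
    then obtain y where y: "y \<in> l2"
      and e: "- fconj (\<lambda>x. ereal (fF x)) y = ereal (pi\<^sup>2 / 12)"
      by (auto simp: gconj)
    have "fconj (\<lambda>x. ereal (fF x)) y = ereal (- (pi\<^sup>2 / 12))"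
      using e by (metis ereal_uminus_uminus uminus_ereal.simps(1))
    with conj_strict[OF y] show False by simp
  qed
qed

end
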